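(* Let $\mathbb{F}\in\{\mathbb{R},\mathbb{C}\}$, $A\in\mathbb{F}^{m\times n}$, $b\in\mathbb{F}^m$, $K\ge1$. Let $x'$ be a stationary point of $\mathcal{K}_{K,reg}$ with $\mathrm{card}(x')=K$, set $z'=(I-A^*A)x'+A^*b$, let $\tilde z'$ be the entries of $z'$ sorted by decreasing magnitude, and assume $$|\tilde z'_{K+1}|<(2\beta_{2K}^2-1)|\tilde z'_K|.$$ If $x''\neq x'$ is another stationary point of $\mathcal{K}_{K,reg}$, then $\mathrm{card}(x'')>K$.
   Context: $\mathrm{card}(x)$ is the number of nonzero entries, $P_K=\{x:\mathrm{card}(x)\le K\}$, $\iota_{P_K}$ its indicator function; $\beta_k=\inf\{\|Ax\|_2/\|x\|_2:x\ne0,\ \mathrm{card}(x)\le k\}$. $\mathcal{Q}_2(\iota_{P_K})$ is the function such that $\mathcal{Q}_2(\iota_{P_K})(x)+\|x\|^2$ is the lower semicontinuous convex envelope of $\iota_{P_K}(x)+\|x\|^2$; explicitly, with $\tilde x$ the entries of $x$ sorted so that $|\tilde x_j|$ is non-increasing, $\mathcal{Q}_2(\iota_{P_K})(x)=\frac{1}{k_*}\big(\sum_{j>K-k_*}|\tilde x_j|\big)^2-\sum_{j>K-k_*}|\tilde x_j|^2$, where $k_*$ is the largest $k\in\{1,\dots,K\}$ with $\sum_{j>K-k}|\tilde x_j|-k|\tilde x_{K+1-k}|\ge0$. $\mathcal{K}_{K,reg}(x)=\mathcal{Q}_2(\iota_{P_K})(x)+\|Ax-b\|_2^2$. $A^*$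 is the conjugate transpose. A stationary point of a function $g$ is a point $x$ with $0$ in the Fréchet subdifferential $\hat\partial g(x)$, i.e. the set of $v$ with $\liminf_{y\to x,y\ne x}(g(y)-g(x)-\mathrm{Re}\langle v,y-x\rangle)/\|y-x\|\ge0$. *)

theory Defs
  imports "HOL-Analysis.Analysis" "HOL-Library.Multiset"
begin

text \<open>Entries are over a field 'a which is either real or complex; vectors in F^n are
  'a^'n, matrices in F^(m x n) are 'a^'n^'m.\<close>

definition card_supp :: "'a::zero^'n \<Rightarrow> nat" where
  "card_supp x = card {i. x $ i \<noteq> 0}"

definition sorted_mags :: "'a::real_normed_vector^'n \<Rightarrow> real list" where
  "sorted_mags x = rev (sorted_list_of_multiset (image_mset (\<lambda>i. norm (x $ i)) (mset_set UNIV)))"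

text \<open>|x~_j| for j = 1,2,...; indices beyond the dimension give 0.\<close>
definition mag :: "'a::real_normed_vector^'n \<Rightarrow> nat \<Rightarrow> real" where
  "mag x j = (if 1 \<le> j \<and> j \<le> length (sorted_mags x) then sorted_mags x ! (j - 1) else 0)"

definition kstar :: "nat \<Rightarrow> 'a::real_normed_vector^'n \<Rightarrow> nat" where
  "kstar K x = (GREATEST k. k \<in> {1..K} \<and>
      (\<Sum>j\<in>{K+1-k..CARD('n)+K}. mag x j) - real k * mag x (K + 1 - k) \<ge> 0)"

definition Q2 :: "nat \<Rightarrow> 'a::real_normed_vector^'n \<Rightarrow> real" where
  "Q2 K x = (let k = kstar K x in
      (1 / real k) * (\<Sum>j\<in>{K+1-k..CARD('n)+K}. mag x j)\<^sup>2
      - (\<Sum>j\<in>{K+1-k..CARD('n)+K}. (mag x j)\<^sup>2))"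

definition Kreg :: "nat \<Rightarrow> 'a::{real_normed_field,real_inner}^'n^'m \<Rightarrow> 'a^'m \<Rightarrow> 'a^'n \<Rightarrow> real" where
  "Kreg K A b x = Q2 K x + (norm (A *v x - b))\<^sup>2"

definition beta :: "'a::{real_normed_field,real_inner}^'n^'m \<Rightarrow> nat \<Rightarrow> real" where
  "beta A k = Inf {norm (A *v x) / norm x | x. x \<noteq> 0 \<and> card_supp x \<le> k}"

text \<open>Frechet subdifferential; for vectors over R or C the real inner product of
  'a^'n equals Re <v, y - x>.\<close>
definition frechet_subdiff :: "('v::real_inner \<Rightarrow> real) \<Rightarrow> 'v \<Rightarrow> 'v set" where
  "frechet_subdiff g x = {v. Liminf (at x) (\<lambda>y. ereal ((g y - g x - v \<bullet> (y - x)) / norm (y - x))) \<ge> 0}"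

definition stationary :: "('v::real_inner \<Rightarrow> real) \<Rightarrow> 'v \<Rightarrow> bool" where
  "stationary g x \<longleftrightarrow> 0 \<in> frechet_subdiff g x"

definition cadj :: "complex^'n^'m \<Rightarrow> complex^'m^'n" where
  "cadj A = (\<chi> i j. cnj (A $ j $ i))"

end

theory Submission
  imports Defs
begin

lemma sm_length: "length (sorted_mags (x::'a::real_normed_vector^'n)) = CARD('n)"
proof -
  have "\<And>M. length (sorted_list_of_multiset M) = size (M::real multiset)"
    by (metis mset_sorted_list_of_multiset size_mset)
  then show ?thesis by (simp add: sorted_mags_def)
qed

lemma sm_sorted: "sorted_wrt (\<ge>) (sorted_mags x)"
  by (simp add: sorted_mags_def sorted_wrt_rev)

lemma sm_mset: "mset (sorted_mags (x::'a::real_normed_vector^'n)) = image_mset (\<lambda>i. norm (x $ i)) (mset_set UNIV)"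
  by (simp add: sorted_mags_def)

lemma sm_count: "length (filter P (sorted_mags (x::'a::real_normed_vector^'n))) = card {i. P (norm (x $ i))}"
proof -
  have "length (filter P (sorted_mags x)) = size (filter_mset P (mset (sorted_mags x)))"
    by (metis mset_filter size_mset)
  also have "\<dots> = size (filter_mset P (image_mset (\<lambda>i. norm (x $ i)) (mset_set UNIV)))"
    by (simp add: sm_mset)
  also have "\<dots> = size (image_mset (\<lambda>i. norm (x $ i)) (filter_mset (\<lambda>i. P (norm (x $ i))) (mset_set UNIV)))"
    using image_mset_filter_mset_swap[of "\<lambda>i. norm (x $ i)" P "mset_set UNIV"] by simp
  also have "\<dots> = card {i. P (norm (x $ i))}"
    by (simp add: filter_mset_mset_set)
  finally show ?thesis .
qed

lemma sm_nonneg: "v \<in> set (sorted_mags (x::'a::real_normed_vector^'n)) \<Longrightarrow> v \<ge> 0"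
proof -
  assume "v \<in> set (sorted_mags x)"
  then have "v \<in># mset (sorted_mags x)" by simp
  then show ?thesis by (auto simp: sm_mset)
qed

lemma mag_nonneg: "mag (x::'a::real_normed_vector^'n) j \<ge> 0"
  unfolding mag_def using sm_nonneg[of _ x]
  by (auto intro!: sm_nonneg[of _ x])

lemma mag_antitone:
  assumes "1 \<le> i" "i \<le> j"
  shows "mag (x::'a::real_normed_vector^'n) j \<le> mag x i"
proof (cases "j \<le> length (sorted_mags x)")
  case True
  have "sorted_mags x ! (j - 1) \<le> sorted_mags x ! (i - 1)"
  proof (cases "i = j")
    case False
    then have "i - 1 < j - 1" using assms by auto
    then show ?thesis using sm_sorted[of x] True assms
      by (auto simp: sorted_wrt_iff_nth_less)
  qed simp
  then show ?thesis using True assms by (simp add: mag_def)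
next
  case False
  then show ?thesis using mag_nonneg[of x i] by (simp add: mag_def)
qed

lemma mag_le:
  assumes "1 \<le> j" "0 \<le> v" "card {i. norm ((x::'a::real_normed_vector^'n) $ i) > v} < j"
  shows "mag x j \<le> v"
proof (cases "j \<le> length (sorted_mags x)")
  case True
  show ?thesis
  proof (rule ccontr)
    assume "\<not> ?thesis"
    then have gt: "sorted_mags x ! (j - 1) > v" using True assms by (simp add: mag_def)
    have "{..<j} \<subseteq> {i. i < length (sorted_mags x) \<and> v < sorted_mags x ! i}"
    proof
      fix i assume "i \<in> {..<j}"
      then have "i \<le> j - 1" by auto
      then have "sorted_mags x ! (j - 1) \<le> sorted_mags x ! i"
        using sm_sorted[of x] True assms
        by (cases "i = j - 1") (auto simp: sorted_wrt_iff_nth_less)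
      then show "i \<in> {i. i < length (sorted_mags x) \<and> v < sorted_mags x ! i}"
        using gt True \<open>i \<in> {..<j}\<close> by auto
    qed
    then have "j \<le> card {i. i < length (sorted_mags x) \<and> v < sorted_mags x ! i}"
      by (metis card_lessThan card_mono finite_Collect_conjI finite_Collect_less_nat)
    also have "\<dots> = card {i. v < norm (x $ i)}"
      using sm_count[of "\<lambda>w. v < w" x] by (simp add: length_filter_conv_card)
    finally show False using assms by simp
  qed
next
  case False
  then show ?thesis using assms by (simp add: mag_def)
qed

lemma mag_ge:
  assumes "1 \<le> j" "card {i. norm ((x::'a::real_normed_vector^'n) $ i) \<ge> v} \<ge> j"
  shows "mag x j \<ge> v"
proof -
  have "card {i. norm (x $ i) \<ge> v} \<le> CARD('n)" by (simp add: card_mono)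
  then have jl: "j \<le> length (sorted_mags x)" using assms by (simp add: sm_length)
  show ?thesis
  proof (rule ccontr)
    assume "\<not> ?thesis"
    then have lt: "sorted_mags x ! (j - 1) < v" using jl assms by (simp add: mag_def)
    have "{i. i < length (sorted_mags x) \<and> v \<le> sorted_mags x ! i} \<subseteq> {..<j-1}"
    proof
      fix i assume i: "i \<in> {i. i < length (sorted_mags x) \<and> v \<le> sorted_mags x ! i}"
      show "i \<in> {..<j-1}"
      proof (rule ccontr)
        assume "i \<notin> {..<j-1}"
        then have "j - 1 \<le> i" by auto
        then have "sorted_mags x ! i \<le> sorted_mags x ! (j - 1)"
          using sm_sorted[of x] i
          by (cases "i = j - 1") (auto simp: sorted_wrt_iff_nth_less)
        then show False using i lt by auto
      qed
    qed
    then have "card {i. i < length (sorted_mags x) \<and> v \<le> sorted_mags x ! i} \<le> j - 1"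
      by (metis card_lessThan card_mono finite_lessThan)
    moreover have "card {i. i < length (sorted_mags x) \<and> v \<le> sorted_mags x ! i} = card {i. v \<le> norm (x $ i)}"
      using sm_count[of "\<lambda>w. v \<le> w" x] by (simp add: length_filter_conv_card)
    ultimately show False using assms by simp
  qed
qed

lemma kstar_props:
  assumes K: "K \<ge> 1"
  shows "kstar K (x::'a::real_normed_vector^'n) \<in> {1..K} \<and>
    (\<Sum>j\<in>{K+1-kstar K x..CARD('n)+K}. mag x j) - real (kstar K x) * mag x (K + 1 - kstar K x) \<ge> 0"
  unfolding kstar_def
proof (rule GreatestI_nat[where k=1 and b=K])
  have "mag x K \<le> (\<Sum>j\<in>{K..CARD('n)+K}. mag x j)"
    by (rule member_le_sum) (auto simp: mag_nonneg)
  then show "1 \<in> {1..K} \<and> (\<Sum>j\<in>{K+1-1..CARD('n)+K}. mag x j) - real 1 * mag x (K + 1 - 1) \<ge> 0"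
    using K by simp
qed auto

lemma Q2_nonneg:
  assumes K: "K \<ge> 1"
  shows "Q2 K (x::'a::real_normed_vector^'n) \<ge> 0"
proof -
  define k where "k = kstar K x"
  define p where "p = K + 1 - k"
  define T where "T = {p..CARD('n)+K}"
  define P where "P = (\<Sum>j\<in>T. mag x j)"
  define Q where "Q = (\<Sum>j\<in>T. (mag x j)\<^sup>2)"
  define a where "a = mag x p"
  have kp: "k \<in> {1..K}" "P - real k * a \<ge> 0"
    using kstar_props[OF K, of x] unfolding k_def p_def T_def P_def a_def by auto
  have p1: "p \<ge> 1" using kp unfolding p_def by auto
  have "Q \<le> (\<Sum>j\<in>T. a * mag x j)"
    unfolding Q_def
  proof (rule sum_mono)
    fix j assume "j \<in> T"
    then have "mag x j \<le> a" using p1 unfolding T_def a_def by (auto intro: mag_antitone)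
    then show "(mag x j)\<^sup>2 \<le> a * mag x j"
      using mag_nonneg[of x j] by (simp add: power2_eq_square mult_right_mono)
  qed
  then have Qa: "Q \<le> a * P" by (simp add: P_def sum_distrib_left)
  have P0: "P \<ge> 0" unfolding P_def by (simp add: sum_nonneg mag_nonneg)
  have kpos: "real k > 0" using kp by auto
  have "P * (P - real k * a) \<ge> 0" using P0 kp by simp
  then have "P\<^sup>2 \<ge> real k * (a * P)" by (simp add: power2_eq_square algebra_simps)
  then have "P\<^sup>2 / real k \<ge> a * P" using kpos by (simp add: field_simps)
  then have "P\<^sup>2 / real k - Q \<ge> 0" using Qa by simp
  moreover have "Q2 K x = P\<^sup>2 / real k - Q"
    unfolding Q2_def Let_def P_def Q_def T_def p_def k_def by simp
  ultimately show ?thesis by simp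
qed

lemma Q2_upper:
  assumes K: "K \<ge> 1" and z: "\<And>j. j \<ge> K + 2 \<Longrightarrow> mag (x::'a::real_normed_vector^'n) j = 0"
  shows "Q2 K x \<le> 2 * (mag x K + mag x (K+1)) * mag x (K+1)"
proof -
  define k where "k = kstar K x"
  define p where "p = K + 1 - k"
  define T where "T = {p..CARD('n)+K}"
  define P where "P = (\<Sum>j\<in>T. mag x j)"
  define Q where "Q = (\<Sum>j\<in>T. (mag x j)\<^sup>2)"
  define P0 where "P0 = (\<Sum>j\<in>{p..K}. mag x j)"
  define Q0 where "Q0 = (\<Sum>j\<in>{p..K}. (mag x j)\<^sup>2)"
  define a where "a = mag x p"
  define e where "e = mag x (K+1)"
  have kp: "k \<in> {1..K}" "P - real k * a \<ge> 0"
    using kstar_props[OF K, of x] unfolding k_def p_def T_def P_def a_def by auto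
  have p1: "p \<ge> 1" "p \<le> K" using kp unfolding p_def by auto
  have N1: "CARD('n) \<ge> 1" by (simp add: Suc_leI)
  have split: "(\<Sum>j\<in>T. f j) = (\<Sum>j\<in>{p..K}. f j) + f (K+1)"
    if f0: "\<And>j. j \<ge> K + 2 \<Longrightarrow> f j = 0" for f :: "nat \<Rightarrow> real"
  proof -
    have "(\<Sum>j\<in>T. f j) = (\<Sum>j\<in>{p..Suc K}. f j)"
      unfolding T_def
      by (rule sum.mono_neutral_right) (use N1 f0 in auto)
    also have "\<dots> = (\<Sum>j\<in>{p..K}. f j) + f (K+1)"
      using p1 by (simp add: sum.cl_ivl_Suc)
    finally show ?thesis .
  qed
  have PP: "P = P0 + e" unfolding P_def P0_def e_def by (rule split) (simp add: z)
  have QQ: "Q = Q0 + e\<^sup>2" unfolding Q_def Q0_def e_def by (rule split) (simp add: z)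
  have cardk: "card {p..K} = k" using kp unfolding p_def by auto
  have CS: "P0\<^sup>2 \<le> Q0 * real k"
    unfolding P0_def Q0_def using sum_squared_le_sum_of_squares[of "mag x" "{p..K}"] cardk by simp
  have "(\<Sum>j\<in>{p..K}. mag x j) = (\<Sum>j\<in>{p..K-1}. mag x j) + mag x K"
  proof -
    obtain K' where K': "K = Suc K'" using K by (cases K) auto
    show ?thesis using p1 unfolding K' by (simp add: sum.cl_ivl_Suc)
  qed
  moreover have "(\<Sum>j\<in>{p..K-1}. mag x j) \<le> (\<Sum>j\<in>{p..K-1}. a)"
    by (rule sum_mono) (use p1 in \<open>auto simp: a_def intro: mag_antitone\<close>)
  moreover have "card {p..K-1} = k - 1" using kp unfolding p_def by auto
  ultimately have P0le: "P0 \<le> real (k - 1) * a + mag x K" unfolding P0_def by simp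
  have k1: "real (k - 1) = real k - 1" using kp by auto
  have ale: "a \<le> mag x K + e" using kp(2) P0le PP k1 by (simp add: algebra_simps)
  have P0ka: "P0 \<le> real k * a"
  proof -
    have "(\<Sum>j\<in>{p..K}. mag x j) \<le> (\<Sum>j\<in>{p..K}. a)"
      by (rule sum_mono) (use p1 in \<open>auto simp: a_def intro: mag_antitone\<close>)
    then show ?thesis using cardk unfolding P0_def by simp
  qed
  have e0: "e \<ge> 0" unfolding e_def by (rule mag_nonneg)
  have kpos: "real k \<ge> 1" using kp by auto
  have "P\<^sup>2 - real k * Q = (P0\<^sup>2 - Q0 * real k) + 2 * P0 * e + e\<^sup>2 - real k * e\<^sup>2"
    unfolding PP QQ by (simp add: power2_eq_square algebra_simps)
  also have "\<dots> \<le> 2 * P0 * e"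
  proof -
    have "e\<^sup>2 \<le> real k * e\<^sup>2" using kpos by (simp add: mult_right_mono[of 1 "real k" "e^2", simplified])
    then show ?thesis using CS by simp
  qed
  also have "\<dots> \<le> 2 * (real k * a) * e" using P0ka e0 by (simp add: mult_right_mono)
  also have "\<dots> \<le> 2 * (real k * (mag x K + e)) * e"
    using ale e0 kpos by (simp add: mult_left_mono mult_right_mono)
  finally have main: "P\<^sup>2 - real k * Q \<le> real k * (2 * (mag x K + e) * e)" by (simp add: algebra_simps)
  have "Q2 K x = P\<^sup>2 / real k - Q"
    unfolding Q2_def Let_def P_def Q_def T_def p_def k_def by simp
  also have "\<dots> = (P\<^sup>2 - real k * Q) / real k" using kpos by (simp add: field_simps)
  also have "\<dots> \<le> 2 * (mag x K + e) * e" using main kpos by (simp add: divide_le_eq mult.commute)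
  finally show ?thesis unfolding e_def .
qed

lemma stat_dir:
  fixes F :: "'v::real_inner \<Rightarrow> real"
  assumes st: "stationary F x" and d: "d \<noteq> 0"
    and ev: "eventually (\<lambda>t. F (x + t *\<^sub>R d) - F x \<le> t * h t) (at_right 0)"
    and lim: "(h \<longlongrightarrow> L) (at_right 0)"
  shows "L \<ge> 0"
proof (rule ccontr)
  assume "\<not> L \<ge> 0"
  then have L: "L < 0" by simp
  have nd: "norm d > 0" using d by simp
  define c where "c = L / (2 * norm d)"
  have c0: "c < 0" unfolding c_def using L nd by (simp add: divide_neg_pos)
  from st have "0 \<le> Liminf (at x) (\<lambda>y. ereal ((F y - F x - 0 \<bullet> (y - x)) / norm (y - x)))"
    by (simp add: stationary_def frechet_subdiff_def)
  then have "\<forall>y<0. eventually (\<lambda>z. y < ereal ((F z - F x) / norm (z - x))) (at x)"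
    by (simp add: le_Liminf_iff)
  moreover have "ereal c < 0" using c0 by simp
  ultimately have "eventually (\<lambda>z. ereal c < ereal ((F z - F x) / norm (z - x))) (at x)"
    by blast
  then have ev1: "eventually (\<lambda>z. c < (F z - F x) / norm (z - x)) (at x)" by simp
  have fl: "filterlim (\<lambda>t. x + t *\<^sub>R d) (at x) (at_right 0)"
  proof (rule filterlim_at[THEN iffD2], rule conjI)
    show "eventually (\<lambda>t. x + t *\<^sub>R d \<in> UNIV \<and> x + t *\<^sub>R d \<noteq> x) (at_right (0::real))"
      using eventually_at_right_less[of "0::real"] by eventually_elim (use d in auto)
    have "((\<lambda>t. x + t *\<^sub>R d) \<longlongrightarrow> x + 0 *\<^sub>R d) (at_right (0::real))"
      by (intro tendsto_intros)
    then show "((\<lambda>t. x + t *\<^sub>R d) \<longlongrightarrow> x) (at_right (0::real))" by simp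
  qed
  have ev2: "eventually (\<lambda>t. c < (F (x + t *\<^sub>R d) - F x) / norm (t *\<^sub>R d)) (at_right 0)"
    using eventually_compose_filterlim[OF ev1 fl] by simp
  have ev3: "eventually (\<lambda>t. h t < L / 2) (at_right 0)"
  proof -
    have "L < L / 2" using L by simp
    from order_tendstoD(2)[OF lim this] show ?thesis .
  qed
  have "eventually (\<lambda>t. False) (at_right (0::real))"
    using ev ev2 ev3 eventually_at_right_less[of "0::real"]
  proof eventually_elim
    case (elim t)
    have t0: "t > 0" using elim by simp
    have "norm (t *\<^sub>R d) = t * norm d" using t0 by simp
    then have "c * (t * norm d) < F (x + t *\<^sub>R d) - F x"
      using elim(2) t0 nd by (simp add: pos_less_divide_eq)
    moreover have "c * (t * norm d) = t * (L / 2)" unfolding c_def using nd by (simp add: field_simps)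
    moreover have "t * h t < t * (L / 2)" using elim(3) t0 by simp
    ultimately show False using elim(1) by simp
  qed
  then show False by (simp add: trivial_limit_at_right_real)
qed

lemma G_exp:
  fixes A :: "'a::{real_normed_field,real_inner}^'n^'m"
  shows "(norm (A *v (x + t *\<^sub>R d) - b))\<^sup>2 = (norm (A *v x - b))\<^sup>2
     + 2 * t * ((A *v d) \<bullet> (A *v x - b)) + t\<^sup>2 * (norm (A *v d))\<^sup>2"
proof -
  define r where "r = A *v x - b"
  define c where "c = A *v d"
  have e: "A *v (x + t *\<^sub>R d) - b = r + t *\<^sub>R c"
  proof -
    have "A *v (t *\<^sub>R d) = t *\<^sub>R (A *v d)"
      by (simp add: vec_eq_iff matrix_vector_mult_def scaleR_sum_right)
    then show ?thesis unfolding r_def c_def by (simp add: matrix_vector_right_distrib)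
  qed
  have "(norm (r + t *\<^sub>R c))\<^sup>2 = (r + t *\<^sub>R c) \<bullet> (r + t *\<^sub>R c)"
    by (simp add: power2_norm_eq_inner)
  also have "\<dots> = r \<bullet> r + 2 * t * (c \<bullet> r) + t\<^sup>2 * (c \<bullet> c)"
    by (simp add: inner_add_left inner_add_right inner_commute power2_eq_square algebra_simps)
  also have "\<dots> = (norm r)\<^sup>2 + 2 * t * (c \<bullet> r) + t\<^sup>2 * (norm c)\<^sup>2"
    by (simp add: power2_norm_eq_inner)
  finally show ?thesis unfolding e by (simp add: r_def c_def)
qed

lemma Q2_sparse:
  assumes K: "K \<ge> 1" and c: "card_supp (y::'a::{real_normed_vector}^'n) \<le> K"
  shows "Q2 K y = 0"
proof -
  have z: "mag y j = 0" if "j \<ge> K + 1" for j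
  proof -
    have "card {i. norm (y $ i) > 0} < j"
      using c that by (simp add: card_supp_def)
    then have "mag y j \<le> 0" using that by (intro mag_le) auto
    then show ?thesis using mag_nonneg[of y j] by simp
  qed
  have "Q2 K y \<le> 2 * (mag y K + mag y (K+1)) * mag y (K+1)"
    by (rule Q2_upper[OF K]) (simp add: z)
  then have "Q2 K y \<le> 0" by (simp add: z)
  then show ?thesis using Q2_nonneg[OF K, of y] by simp
qed

lemma supp_upd:
  assumes "x $ i = 0"
  shows "{l. (x + t *\<^sub>R axis i u) $ l \<noteq> 0} \<subseteq> insert i {l. x $ l \<noteq> 0}"
  using assms by (auto simp: axis_def)

lemma C_zero:
  fixes A :: "'a::{real_normed_field,real_inner}^'n^'m" and As :: "'a^'m^'n"
  assumes adj: "\<And>d r. (A *v d) \<bullet> r = d \<bullet> (As *v r)"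
    and K: "K \<ge> 1" and st: "stationary (Kreg K A b) x" and cx: "card_supp x \<le> K"
    and ci: "x $ i \<noteq> 0 \<or> card_supp x < K"
  shows "(As *v (A *v x - b)) $ i = 0"
proof (rule ccontr)
  define g where "g = As *v (A *v x - b)"
  assume "\<not> ?thesis"
  then have gi: "g $ i \<noteq> 0" unfolding g_def .
  define u where "u = - (g $ i)"
  define d where "d = axis i u"
  have d0: "d \<noteq> 0" using gi unfolding d_def u_def by (simp add: axis_eq_0_iff)
  have sp: "card_supp (x + t *\<^sub>R d) \<le> K" for t
  proof (cases "x $ i = 0")
    case True
    have "card {l. (x + t *\<^sub>R d) $ l \<noteq> 0} \<le> card (insert i {l. x $ l \<noteq> 0})"
      unfolding d_def by (rule card_mono[OF _ supp_upd[OF True]]) simp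
    also have "\<dots> \<le> Suc (card {l. x $ l \<noteq> 0})" by (simp add: card_insert_le_m1)
    finally show ?thesis using ci True unfolding card_supp_def by simp
  next
    case False
    have "{l. (x + t *\<^sub>R d) $ l \<noteq> 0} \<subseteq> {l. x $ l \<noteq> 0}"
      using False unfolding d_def by (auto simp: axis_def)
    then have "card {l. (x + t *\<^sub>R d) $ l \<noteq> 0} \<le> card {l. x $ l \<noteq> 0}"
      by (rule card_mono[rotated]) simp
    then show ?thesis using cx unfolding card_supp_def by simp
  qed
  have Q0: "Q2 K x = 0" by (rule Q2_sparse[OF K cx])
  have ev: "eventually (\<lambda>t. Kreg K A b (x + t *\<^sub>R d) - Kreg K A b x
      \<le> t * (2 * (d \<bullet> g) + t * (norm (A *v d))\<^sup>2)) (at_right 0)"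
  proof (rule always_eventually, rule allI)
    fix t :: real
    have "Kreg K A b (x + t *\<^sub>R d) - Kreg K A b x
      = 2 * t * ((A *v d) \<bullet> (A *v x - b)) + t\<^sup>2 * (norm (A *v d))\<^sup>2"
      unfolding Kreg_def using Q2_sparse[OF K sp[of t]] Q0 by (simp add: G_exp)
    also have "\<dots> = t * (2 * (d \<bullet> g) + t * (norm (A *v d))\<^sup>2)"
      unfolding g_def adj by (simp add: power2_eq_square algebra_simps)
    finally show "Kreg K A b (x + t *\<^sub>R d) - Kreg K A b x
      \<le> t * (2 * (d \<bullet> g) + t * (norm (A *v d))\<^sup>2)" by simp
  qed
  have lim: "((\<lambda>t. 2 * (d \<bullet> g) + t * (norm (A *v d))\<^sup>2) \<longlongrightarrow> 2 * (d \<bullet> g) + 0 * (norm (A *v d))\<^sup>2) (at_right 0)"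
    by (intro tendsto_intros)
  have "2 * (d \<bullet> g) + 0 * (norm (A *v d))\<^sup>2 \<ge> 0" by (rule stat_dir[OF st d0 ev lim])
  then have "d \<bullet> g \<ge> 0" by simp
  moreover have "d \<bullet> g = - (g $ i \<bullet> g $ i)" unfolding d_def u_def by (simp add: inner_axis')
  ultimately have "g $ i \<bullet> g $ i \<le> 0" by simp
  then show False using gi inner_gt_zero_iff[of "g $ i"] by linarith
qed

lemma C_bound:
  fixes A :: "'a::{real_normed_field,real_inner}^'n^'m" and As :: "'a^'m^'n"
  assumes adj: "\<And>d r. (A *v d) \<bullet> r = d \<bullet> (As *v r)"
    and K: "K \<ge> 1" and st: "stationary (Kreg K A b) x" and cx: "card_supp x = K"
    and xi: "x $ i = 0" and xj: "x $ j \<noteq> 0"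
  shows "norm ((As *v (A *v x - b)) $ i) \<le> norm (x $ j)"
proof (rule ccontr)
  define g where "g = As *v (A *v x - b)"
  assume "\<not> ?thesis"
  then have gi: "g $ i \<noteq> 0" and gl: "norm (g $ i) > norm (x $ j)" unfolding g_def by auto
  define u where "u = - (g $ i)"
  define d where "d = axis i u"
  define m where "m = norm (x $ j)"
  have m0: "m > 0" using xj unfolding m_def by simp
  have nu: "norm u > 0" using gi unfolding u_def by simp
  have d0: "d \<noteq> 0" using gi unfolding d_def u_def by (simp add: axis_eq_0_iff)
  have ij: "i \<noteq> j" using xi xj by auto
  have fin: "finite {l. x $ l \<noteq> 0}" by simp
  have Q0: "Q2 K x \<ge> 0" by (rule Q2_nonneg[OF K])
  have yv: "(x + t *\<^sub>R d) $ l = (if l = i then t *\<^sub>R u else x $ l)" for t l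
    using xi unfolding d_def by (auto simp: axis_def)
  have Qy: "Q2 K (x + t *\<^sub>R d) \<le> 2 * (m + t * norm u) * (t * norm u)"
    if t0: "t > 0" and tl: "t * norm u < m" for t
  proof -
    let ?y = "x + t *\<^sub>R d"
    have nyi: "norm (?y $ i) = t * norm u" using t0 unfolding yv by simp
    have z: "mag ?y l = 0" if "l \<ge> K + 2" for l
    proof -
      have "{l. norm (?y $ l) > 0} \<subseteq> insert i {l. x $ l \<noteq> 0}" unfolding yv by (auto split: if_splits)
      then have "card {l. norm (?y $ l) > 0} \<le> card (insert i {l. x $ l \<noteq> 0})"
        by (rule card_mono[rotated]) simp
      also have "\<dots> \<le> K + 1" using cx fin by (simp add: card_supp_def card_insert_le_m1)
      finally have "mag ?y l \<le> 0" using that by (intro mag_le) auto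
      then show ?thesis using mag_nonneg[of ?y l] by simp
    qed
    have mK: "mag ?y K \<le> m"
    proof -
      have "{l. norm (?y $ l) > m} \<subseteq> {l. x $ l \<noteq> 0} - {j}"
        using tl nyi unfolding yv by (auto simp: m_def split: if_splits)
      then have "card {l. norm (?y $ l) > m} \<le> card ({l. x $ l \<noteq> 0} - {j})"
        by (rule card_mono[rotated]) simp
      also have "\<dots> = K - 1" using cx xj fin by (simp add: card_supp_def)
      finally show ?thesis using K m0 by (intro mag_le) auto
    qed
    have mK1: "mag ?y (K+1) \<le> t * norm u"
    proof -
      have tu: "t * norm u > 0" using t0 nu by simp
      have "{l. norm (?y $ l) > t * norm u} \<subseteq> {l. x $ l \<noteq> 0}"
        using nyi tu unfolding yv by (auto split: if_splits)
      then have "card {l. norm (?y $ l) > t * norm u} \<le> card {l. x $ l \<noteq> 0}"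
        by (rule card_mono[rotated]) simp
      then show ?thesis using cx t0 nu by (intro mag_le) (auto simp: card_supp_def)
    qed
    have "Q2 K ?y \<le> 2 * (mag ?y K + mag ?y (K+1)) * mag ?y (K+1)"
      by (rule Q2_upper[OF K z])
    also have "\<dots> \<le> 2 * (m + t * norm u) * (t * norm u)"
    proof -
      have a: "0 \<le> mag ?y K + mag ?y (K+1)" by (simp add: mag_nonneg add_nonneg_nonneg)
      have "(mag ?y K + mag ?y (K+1)) * mag ?y (K+1) \<le> (m + t * norm u) * mag ?y (K+1)"
        using mK mK1 mag_nonneg[of ?y "K+1"] by (intro mult_right_mono) auto
      also have "\<dots> \<le> (m + t * norm u) * (t * norm u)"
        using mK1 m0 t0 nu by (intro mult_left_mono) auto
      finally have "(mag ?y K + mag ?y (K+1)) * mag ?y (K+1) \<le> (m + t * norm u) * (t * norm u)" .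
      then show ?thesis by (simp only: mult.assoc)
    qed
    finally show ?thesis .
  qed
  define h where "h t = 2 * (m + t * norm u) * norm u + 2 * (d \<bullet> g) + t * (norm (A *v d))\<^sup>2" for t
  have ev: "eventually (\<lambda>t. Kreg K A b (x + t *\<^sub>R d) - Kreg K A b x \<le> t * h t) (at_right 0)"
  proof -
    have "eventually (\<lambda>t. t < m / norm u) (at_right (0::real))"
      using order_tendstoD(2)[OF tendsto_ident_at[of "0::real" "{0<..}"], of "m / norm u"] m0 nu
      by simp
    then show ?thesis using eventually_at_right_less[of "0::real"]
    proof eventually_elim
      case (elim t)
      then have t0: "t > 0" and tl: "t * norm u < m" using nu by (auto simp: pos_less_divide_eq)
      have "Kreg K A b (x + t *\<^sub>R d) - Kreg K A b x
        = Q2 K (x + t *\<^sub>R d) - Q2 K x + 2 * t * ((A *v d) \<bullet> (A *v x - b)) + t\<^sup>2 * (norm (A *v d))\<^sup>2"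
        unfolding Kreg_def by (simp add: G_exp)
      also have "\<dots> \<le> 2 * (m + t * norm u) * (t * norm u) + 2 * t * (d \<bullet> g) + t\<^sup>2 * (norm (A *v d))\<^sup>2"
        using Qy[OF t0 tl] Q0 unfolding g_def adj by simp
      also have "\<dots> = t * h t" unfolding h_def by (simp add: power2_eq_square algebra_simps)
      finally show ?case .
    qed
  qed
  have lim: "(h \<longlongrightarrow> 2 * (m + 0 * norm u) * norm u + 2 * (d \<bullet> g) + 0 * (norm (A *v d))\<^sup>2) (at_right 0)"
    unfolding h_def by (intro tendsto_intros)
  have "2 * (m + 0 * norm u) * norm u + 2 * (d \<bullet> g) + 0 * (norm (A *v d))\<^sup>2 \<ge> 0"
    by (rule stat_dir[OF st d0 ev lim])
  moreover have "d \<bullet> g = - (norm (g $ i))\<^sup>2" unfolding d_def u_def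
    by (simp add: inner_axis' power2_norm_eq_inner)
  moreover have "norm u = norm (g $ i)" unfolding u_def by simp
  ultimately have "m * norm (g $ i) \<ge> (norm (g $ i))\<^sup>2" by (simp add: power2_eq_square)
  then have "m \<ge> norm (g $ i)" using gi by (simp add: power2_eq_square)
  then show False using gl unfolding m_def by simp
qed

lemma sum_if_univ: "(\<Sum>l\<in>(UNIV::'n::finite set). if l \<in> X then f l else 0) = sum f X"
  using sum.inter_restrict[of "UNIV::'n set" f X] by simp

lemma neg_inner_le: "- ((x::'v::real_inner) \<bullet> y) \<le> norm x * norm y"
  using norm_cauchy_schwarz[of "-x" y] by simp

lemma norm_sq_vec: "(norm (w::'a::real_inner^'n))\<^sup>2 = (\<Sum>l\<in>UNIV. (norm (w $ l))\<^sup>2)"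
  by (simp add: power2_norm_eq_inner inner_vec_def)

lemma main_gen:
  fixes A :: "'a::{real_normed_field,real_inner}^'n^'m" and As :: "'a^'m^'n"
  assumes adj: "\<And>d r. (A *v d) \<bullet> r = d \<bullet> (As *v r)"
    and K: "K \<ge> 1" and st1: "stationary (Kreg K A b) x1" and c1: "card_supp x1 = K"
    and hyp: "mag ((mat 1 - As ** A) *v x1 + As *v b) (K + 1)
       < (2 * (beta A (2 * K))\<^sup>2 - 1) * mag ((mat 1 - As ** A) *v x1 + As *v b) K"
    and st2: "stationary (Kreg K A b) x2" and ne: "x2 \<noteq> x1"
  shows "card_supp x2 > K"
proof (rule ccontr)
  assume "\<not> ?thesis"
  then have c2: "card_supp x2 \<le> K" by simp
  define z where "z = (mat 1 - As ** A) *v x1 + As *v b"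
  define g1 where "g1 = As *v (A *v x1 - b)"
  define g2 where "g2 = As *v (A *v x2 - b)"
  define S where "S = {l. x1 $ l \<noteq> 0}"
  define T where "T = {l. x2 $ l \<noteq> 0}"
  define \<rho> where "\<rho> = mag z (K + 1)"
  define \<mu> where "\<mu> = mag z K"
  define \<beta> where "\<beta> = beta A (2 * K)"
  define \<gamma> where "\<gamma> = 2 * \<beta>\<^sup>2 - 1"
  have hyp': "\<rho> < \<gamma> * \<mu>" using hyp unfolding \<rho>_def \<mu>_def \<gamma>_def \<beta>_def z_def .
  have cS: "card S = K" using c1 unfolding S_def card_supp_def .
  have cT: "card T \<le> K" using c2 unfolding T_def card_supp_def .
  have finS: "finite S" and finT: "finite T" by auto
  have zeq: "z = x1 - g1"
    unfolding z_def g1_def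
    by (simp add: matrix_vector_mult_diff_rdistrib matrix_vector_mult_diff_distrib
        matrix_vector_mul_assoc)
  have F1: "g1 $ l = 0" if "l \<in> S" for l
    using C_zero[OF adj K st1, of l] c1 that unfolding g1_def S_def by simp
  have F2: "g2 $ l = 0" if "l \<in> T" for l
    using C_zero[OF adj K st2 c2, of l] that unfolding g2_def T_def by simp
  have F3: "norm (g1 $ l) \<le> norm (x1 $ s)" if "l \<notin> S" "s \<in> S" for l s
    using C_bound[OF adj K st1 c1, of l s] that unfolding g1_def S_def by simp
  have F4: "g2 $ l = 0" if "card T < K" for l
  proof (cases "l \<in> T")
    case True then show ?thesis by (rule F2)
  next
    case False
    then show ?thesis using C_zero[OF adj K st2 c2, of l] that
      unfolding g2_def T_def card_supp_def by simp
  qed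
  have F5: "norm (g2 $ l) \<le> norm (x2 $ t)" if "l \<notin> T" "t \<in> T" "card T = K" for l t
    using C_bound[OF adj K st2, of l t] that unfolding g2_def T_def card_supp_def by simp
  have R1: "norm (g1 $ l) \<le> \<rho>" if l: "l \<notin> S" for l
  proof -
    have "insert l S \<subseteq> {i. norm (z $ i) \<ge> norm (g1 $ l)}"
      using F3[OF l] F1 l unfolding zeq S_def by auto
    then have "card (insert l S) \<le> card {i. norm (z $ i) \<ge> norm (g1 $ l)}"
      by (rule card_mono[rotated]) simp
    then have "card {i. norm (z $ i) \<ge> norm (g1 $ l)} \<ge> K + 1" using l finS cS by simp
    then show ?thesis unfolding \<rho>_def by (intro mag_ge) auto
  qed
  have R2: "\<mu> \<le> norm (x1 $ s)" if s: "s \<in> S" for s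
  proof -
    have "{i. norm (z $ i) > norm (x1 $ s)} \<subseteq> S - {s}"
    proof
      fix i assume i: "i \<in> {i. norm (z $ i) > norm (x1 $ s)}"
      show "i \<in> S - {s}"
      proof (cases "i \<in> S")
        case True then show ?thesis using i F1[OF True] unfolding zeq by auto
      next
        case False then show ?thesis using i F3[OF False s] unfolding zeq S_def by auto
      qed
    qed
    then have "card {i. norm (z $ i) > norm (x1 $ s)} \<le> card (S - {s})"
      by (rule card_mono[rotated]) simp
    also have "\<dots> = K - 1" using s cS finS by simp
    finally show ?thesis unfolding \<mu>_def using K by (intro mag_le) auto
  qed
  have \<rho>0: "\<rho> \<ge> 0" unfolding \<rho>_def by (rule mag_nonneg)
  have \<mu>0: "\<mu> \<ge> 0" unfolding \<mu>_def by (rule mag_nonneg)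
  have \<gamma>0: "\<gamma> > 0"
  proof (rule ccontr)
    assume "\<not> \<gamma> > 0"
    then have "\<gamma> * \<mu> \<le> 0" using \<mu>0 by (simp add: mult_nonpos_nonneg)
    then show False using hyp' \<rho>0 by simp
  qed
  define w where "w = x2 - x1"
  have w0: "w \<noteq> 0" using ne unfolding w_def by simp
  have cw: "card_supp w \<le> 2 * K"
  proof -
    have "{l. w $ l \<noteq> 0} \<subseteq> S \<union> T" unfolding w_def S_def T_def by auto
    then have "card {l. w $ l \<noteq> 0} \<le> card (S \<union> T)" by (rule card_mono[rotated]) simp
    also have "\<dots> \<le> card S + card T" by (rule card_Un_le)
    finally show ?thesis using cS cT unfolding card_supp_def by simp
  qed
  define B where "B = {norm (A *v x) / norm x | x. x \<noteq> 0 \<and> card_supp x \<le> 2 * K}"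
  have wB: "norm (A *v w) / norm w \<in> B" unfolding B_def using w0 cw by blast
  have bddB: "bdd_below B" unfolding B_def by (rule bdd_belowI[of _ 0]) auto
  have \<beta>le: "\<beta> \<le> norm (A *v w) / norm w"
    unfolding \<beta>_def beta_def B_def[symmetric] by (rule cInf_lower[OF wB bddB])
  have \<beta>0: "\<beta> \<ge> 0"
    unfolding \<beta>_def beta_def B_def[symmetric]
    by (rule cInf_greatest) (use wB in auto, auto simp: B_def)
  have nw: "norm w > 0" using w0 by simp
  have "\<beta> * norm w \<le> norm (A *v w)" using \<beta>le nw by (simp add: pos_le_divide_eq)
  then have betaw: "\<beta>\<^sup>2 * (norm w)\<^sup>2 \<le> (norm (A *v w))\<^sup>2"
    using \<beta>0 nw by (metis power_mono power_mult_distrib mult_nonneg_nonneg less_imp_le)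
  have "As *v (A *v w) = g2 - g1"
    unfolding w_def g1_def g2_def by (simp add: matrix_vector_mult_diff_distrib)
  then have "(norm (A *v w))\<^sup>2 = w \<bullet> (g2 - g1)"
    using adj[of w "A *v w"] by (simp add: power2_norm_eq_inner)
  also have "\<dots> = (\<Sum>l\<in>UNIV. w $ l \<bullet> (g2 $ l - g1 $ l))" by (simp add: inner_vec_def)
  also have "\<dots> \<le> (\<Sum>l\<in>UNIV. (if l \<in> S - T then norm (x1 $ l) * norm (g2 $ l) else 0)
                        + (if l \<in> T - S then norm (x2 $ l) * \<rho> else 0))"
  proof (rule sum_mono)
    fix l :: 'n
    show "w $ l \<bullet> (g2 $ l - g1 $ l) \<le> (if l \<in> S - T then norm (x1 $ l) * norm (g2 $ l) else 0)
                        + (if l \<in> T - S then norm (x2 $ l) * \<rho> else 0)"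
    proof (cases "l \<in> S"; cases "l \<in> T")
      assume "l \<in> S" "l \<in> T"
      then show ?thesis using F1 F2 by simp
    next
      assume a: "l \<in> S" "l \<notin> T"
      then have "w $ l \<bullet> (g2 $ l - g1 $ l) = - (x1 $ l \<bullet> g2 $ l)"
        using F1 unfolding w_def T_def by simp
      then show ?thesis using a neg_inner_le[of "x1 $ l" "g2 $ l"] by simp
    next
      assume a: "l \<notin> S" "l \<in> T"
      then have "w $ l \<bullet> (g2 $ l - g1 $ l) = - (x2 $ l \<bullet> g1 $ l)"
        using F2 unfolding w_def S_def by simp
      also have "\<dots> \<le> norm (x2 $ l) * norm (g1 $ l)" by (rule neg_inner_le)
      also have "\<dots> \<le> norm (x2 $ l) * \<rho>" using R1[OF a(1)] by (simp add: mult_left_mono)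
      finally show ?thesis using a by simp
    next
      assume a: "l \<notin> S" "l \<notin> T"
      then show ?thesis unfolding w_def S_def T_def by simp
    qed
  qed
  also have "\<dots> = (\<Sum>l\<in>S - T. norm (x1 $ l) * norm (g2 $ l)) + (\<Sum>l\<in>T - S. norm (x2 $ l) * \<rho>)"
    by (simp only: sum.distrib sum_if_univ)
  finally have Aw: "(norm (A *v w))\<^sup>2 \<le> (\<Sum>l\<in>S - T. norm (x1 $ l) * norm (g2 $ l)) + (\<Sum>l\<in>T - S. norm (x2 $ l) * \<rho>)" .
  have cTS: "card (T - S) \<le> card (S - T)"
  proof -
    have "card (T - S) = card T - card (T \<inter> S)" by (simp add: card_Diff_subset_Int)
    moreover have "card (S - T) = card S - card (S \<inter> T)" by (simp add: card_Diff_subset_Int)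
    ultimately show ?thesis using cS cT by (simp add: Int_commute)
  qed
  obtain \<sigma> where \<sigma>: "\<sigma> ` (T - S) \<subseteq> S - T" "inj_on \<sigma> (T - S)"
    using card_le_inj[OF _ _ cTS] by auto
  have first: "(\<Sum>l\<in>S - T. norm (x1 $ l) * norm (g2 $ l)) \<le> (\<Sum>t\<in>T - S. norm (x1 $ \<sigma> t) * norm (x2 $ t))"
  proof (cases "card T < K")
    case True
    then have "(\<Sum>l\<in>S - T. norm (x1 $ l) * norm (g2 $ l)) = 0" using F4 by simp
    moreover have "(\<Sum>t\<in>T - S. norm (x1 $ \<sigma> t) * norm (x2 $ t)) \<ge> 0" by (simp add: sum_nonneg)
    ultimately show ?thesis by simp
  next
    case False
    then have cTK: "card T = K" using cT by simp
    have "card (T - S) = card (S - T)"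
    proof -
      have "card (T - S) = card T - card (T \<inter> S)" by (simp add: card_Diff_subset_Int)
      moreover have "card (S - T) = card S - card (S \<inter> T)" by (simp add: card_Diff_subset_Int)
      ultimately show ?thesis using cS cTK by (simp add: Int_commute)
    qed
    then have "card (\<sigma> ` (T - S)) = card (S - T)" using \<sigma>(2) by (simp add: card_image)
    then have im: "\<sigma> ` (T - S) = S - T" using \<sigma>(1) by (intro card_subset_eq) auto
    have "(\<Sum>l\<in>S - T. norm (x1 $ l) * norm (g2 $ l)) = (\<Sum>t\<in>T - S. norm (x1 $ \<sigma> t) * norm (g2 $ \<sigma> t))"
      unfolding im[symmetric] by (rule sum.reindex[OF \<sigma>(2), unfolded comp_def])
    also have "\<dots> \<le> (\<Sum>t\<in>T - S. norm (x1 $ \<sigma> t) * norm (x2 $ t))"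
    proof (rule sum_mono)
      fix t assume t: "t \<in> T - S"
      then have "\<sigma> t \<in> S - T" using \<sigma>(1) by auto
      then have "norm (g2 $ \<sigma> t) \<le> norm (x2 $ t)" using F5[OF _ _ cTK, of "\<sigma> t" t] t by auto
      then show "norm (x1 $ \<sigma> t) * norm (g2 $ \<sigma> t) \<le> norm (x1 $ \<sigma> t) * norm (x2 $ t)"
        by (simp add: mult_left_mono)
    qed
    finally show ?thesis .
  qed
  define trm where "trm t = norm (x1 $ \<sigma> t) * norm (x2 $ t) + norm (x2 $ t) * \<rho>" for t
  have Aw2: "(norm (A *v w))\<^sup>2 \<le> (\<Sum>t\<in>T - S. trm t)"
    using Aw first unfolding trm_def by (simp add: sum.distrib)
  have termlt: "trm t < \<beta>\<^sup>2 * ((norm (x2 $ t))\<^sup>2 + (norm (x1 $ \<sigma> t))\<^sup>2)" if t: "t \<in> T - S" for t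
  proof -
    define a where "a = norm (x2 $ t)"
    define c where "c = norm (x1 $ \<sigma> t)"
    have a0: "a > 0" using t unfolding a_def T_def by simp
    have "\<sigma> t \<in> S" using \<sigma>(1) t by auto
    then have cmu: "\<mu> \<le> c" unfolding c_def by (rule R2)
    have c0: "c \<ge> 0" unfolding c_def by simp
    have "\<rho> < \<gamma> * c" using hyp' cmu \<gamma>0 by (meson less_le_trans mult_left_mono less_imp_le)
    then have "a * \<rho> < a * (\<gamma> * c)" using a0 by simp
    then have "trm t < c * a + a * (\<gamma> * c)" unfolding trm_def a_def c_def by simp
    also have "\<dots> = 2 * \<beta>\<^sup>2 * (a * c)" unfolding \<gamma>_def by (simp add: algebra_simps)
    also have "\<dots> \<le> \<beta>\<^sup>2 * (a\<^sup>2 + c\<^sup>2)"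
    proof -
      have "2 * (a * c) \<le> a\<^sup>2 + c\<^sup>2" using sum_squares_bound[of a c] by simp
      then have "\<beta>\<^sup>2 * (2 * (a * c)) \<le> \<beta>\<^sup>2 * (a\<^sup>2 + c\<^sup>2)" by (simp add: mult_left_mono)
      then show ?thesis by (simp add: algebra_simps)
    qed
    finally show ?thesis unfolding a_def c_def .
  qed
  have sumsq: "(\<Sum>t\<in>T - S. \<beta>\<^sup>2 * ((norm (x2 $ t))\<^sup>2 + (norm (x1 $ \<sigma> t))\<^sup>2)) \<le> \<beta>\<^sup>2 * (norm w)\<^sup>2"
  proof -
    have "(\<Sum>t\<in>T - S. (norm (x1 $ \<sigma> t))\<^sup>2) = (\<Sum>l\<in>\<sigma> ` (T - S). (norm (x1 $ l))\<^sup>2)"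
      by (rule sum.reindex[OF \<sigma>(2), unfolded comp_def, symmetric])
    also have "\<dots> \<le> (\<Sum>l\<in>S - T. (norm (x1 $ l))\<^sup>2)" by (rule sum_mono2) (use \<sigma>(1) in auto)
    also have "\<dots> = (\<Sum>l\<in>S - T. (norm (w $ l))\<^sup>2)"
      by (rule sum.cong) (auto simp: w_def T_def)
    finally have s1: "(\<Sum>t\<in>T - S. (norm (x1 $ \<sigma> t))\<^sup>2) \<le> (\<Sum>l\<in>S - T. (norm (w $ l))\<^sup>2)" .
    have s2: "(\<Sum>t\<in>T - S. (norm (x2 $ t))\<^sup>2) = (\<Sum>l\<in>T - S. (norm (w $ l))\<^sup>2)"
      by (rule sum.cong) (auto simp: w_def S_def)
    have "(\<Sum>l\<in>T - S. (norm (w $ l))\<^sup>2) + (\<Sum>l\<in>S - T. (norm (w $ l))\<^sup>2)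
        = (\<Sum>l\<in>(T - S) \<union> (S - T). (norm (w $ l))\<^sup>2)"
      by (rule sum.union_disjoint[symmetric]) auto
    also have "\<dots> \<le> (\<Sum>l\<in>UNIV. (norm (w $ l))\<^sup>2)" by (rule sum_mono2) auto
    also have "\<dots> = (norm w)\<^sup>2" by (rule norm_sq_vec[symmetric])
    finally have "(\<Sum>t\<in>T - S. (norm (x2 $ t))\<^sup>2 + (norm (x1 $ \<sigma> t))\<^sup>2) \<le> (norm w)\<^sup>2"
      using s1 s2 by (simp add: sum.distrib)
    then show ?thesis by (simp add: sum_distrib_left[symmetric] mult_left_mono)
  qed
  have "(\<Sum>t\<in>T - S. trm t) < \<beta>\<^sup>2 * (norm w)\<^sup>2"
  proof (cases "T - S = {}")
    case True
    have "\<beta> \<noteq> 0"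
    proof
      assume "\<beta> = 0" then show False using \<gamma>0 unfolding \<gamma>_def by simp
    qed
    then have "\<beta>\<^sup>2 > 0" by simp
    then have "\<beta>\<^sup>2 * (norm w)\<^sup>2 > 0" using nw by simp
    moreover have "(\<Sum>t\<in>T - S. trm t) = 0" unfolding True by simp
    ultimately show ?thesis by simp
  next
    case False
    have "(\<Sum>t\<in>T - S. trm t) < (\<Sum>t\<in>T - S. \<beta>\<^sup>2 * ((norm (x2 $ t))\<^sup>2 + (norm (x1 $ \<sigma> t))\<^sup>2))"
      by (rule sum_strict_mono) (use False termlt in auto)
    then show ?thesis using sumsq by simp
  qed
  then show False using Aw2 betaw by simp
qed

lemma cinner_swap: "((a::complex) * d) \<bullet> r = d \<bullet> (cnj a * r)"
  by (simp add: inner_complex_def algebra_simps)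

lemma adj_real: "((A::real^'n^'m) *v d) \<bullet> r = d \<bullet> (transpose A *v r)"
proof -
  have "(A *v d) \<bullet> r = (\<Sum>k\<in>UNIV. \<Sum>i\<in>UNIV. A $ k $ i * d $ i * r $ k)"
    by (simp add: inner_vec_def matrix_vector_mult_def sum_distrib_right)
  also have "\<dots> = (\<Sum>i\<in>UNIV. \<Sum>k\<in>UNIV. d $ i * (A $ k $ i * r $ k))"
    by (subst sum.swap) (simp add: algebra_simps)
  also have "\<dots> = d \<bullet> (transpose A *v r)"
    by (simp add: inner_vec_def matrix_vector_mult_def sum_distrib_left transpose_def)
  finally show ?thesis .
qed

lemma adj_complex: "((A::complex^'n^'m) *v d) \<bullet> r = d \<bullet> (cadj A *v r)"
proof -
  have "(A *v d) \<bullet> r = (\<Sum>k\<in>UNIV. \<Sum>i\<in>UNIV. (A $ k $ i * d $ i) \<bullet> r $ k)"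
    by (simp add: inner_vec_def matrix_vector_mult_def inner_sum_left)
  also have "\<dots> = (\<Sum>i\<in>UNIV. \<Sum>k\<in>UNIV. d $ i \<bullet> (cnj (A $ k $ i) * r $ k))"
    by (subst sum.swap) (simp add: cinner_swap)
  also have "\<dots> = d \<bullet> (cadj A *v r)"
    by (simp add: inner_vec_def matrix_vector_mult_def inner_sum_right cadj_def)
  finally show ?thesis .
qed

theorem theorem5p3:
  shows
  "(\<forall>(A::real^'n^'m) (b::real^'m) (K::nat) (x'::real^'n) x''.
      K \<ge> 1 \<and> stationary (Kreg K A b) x' \<and> card_supp x' = K \<and>
      (let z' = (mat 1 - transpose A ** A) *v x' + transpose A *v b in
         mag z' (K + 1) < (2 * (beta A (2 * K))\<^sup>2 - 1) * mag z' K) \<and>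
      stationary (Kreg K A b) x'' \<and> x'' \<noteq> x'
      \<longrightarrow> card_supp x'' > K)
   \<and>
   (\<forall>(A::complex^'n^'m) (b::complex^'m) (K::nat) (x'::complex^'n) x''.
      K \<ge> 1 \<and> stationary (Kreg K A b) x' \<and> card_supp x' = K \<and>
      (let z' = (mat 1 - cadj A ** A) *v x' + cadj A *v b in
         mag z' (K + 1) < (2 * (beta A (2 * K))\<^sup>2 - 1) * mag z' K) \<and>
      stationary (Kreg K A b) x'' \<and> x'' \<noteq> x'
      \<longrightarrow> card_supp x'' > K)"
proof (intro conjI allI impI)
  fix A :: "real^'n^'m" and b :: "real^'m" and K :: nat and x' x'' :: "real^'n"
  assume h: "K \<ge> 1 \<and> stationary (Kreg K A b) x' \<and> card_supp x' = K \<and>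
      (let z' = (mat 1 - transpose A ** A) *v x' + transpose A *v b in
         mag z' (K + 1) < (2 * (beta A (2 * K))\<^sup>2 - 1) * mag z' K) \<and>
      stationary (Kreg K A b) x'' \<and> x'' \<noteq> x'"
  show "card_supp x'' > K"
    using h by (intro main_gen[where As = "transpose A", OF adj_real]) (auto simp: Let_def)
next
  fix A :: "complex^'n^'m" and b :: "complex^'m" and K :: nat and x' x'' :: "complex^'n"
  assume h: "K \<ge> 1 \<and> stationary (Kreg K A b) x' \<and> card_supp x' = K \<and>
      (let z' = (mat 1 - cadj A ** A) *v x' + cadj A *v b in
         mag z' (K + 1) < (2 * (beta A (2 * K))\<^sup>2 - 1) * mag z' K) \<and>
      stationary (Kreg K A b) x'' \<and> x'' \<noteq> x'"
  show "card_supp x'' > K"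
    using h by (intro main_gen[where As = "cadj A", OF adj_complex]) (auto simp: Let_def)
qed

end
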